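(* Let $\mathsf C$ be a rainbow cycle and let $\mathsf X$ be either a rainbow cycle or a bad piece. Assume that $\chi(\mathsf X)\cap\chi(\mathsf C\setminus\mathsf X)=\emptyset$, that $E(\mathsf C)\setminus E(\mathsf X)\neq\emptyset$, and that $|V(\mathsf C)\cap V(\mathsf X)|\ge 2$. Then there is a rainbow even cycle all of whose (colored) edges belong to $\mathsf C\cup\mathsf X$.
   Context: A (colored) graph is a finite set $\mathsf G$ of pairs $(e,\alpha)$, where the $e$'s are pairwise distinct 2-element subsets of a vertex set and $\alpha$ is a color (colors may repeat). $V(\mathsf G)$, $E(\mathsf G)$, $\chi(\mathsf G)$ denote its vertex set, its set of underlying uncolored edges, and its set of colors; $\mathsf C\setminus\mathsf X$ is set difference of colored edges. $\mathsf G$ is rainbow if $|\chi(\mathsf G)|=|\mathsf G|$ and almost rainbow if $|\chi(\mathsf G)|=|\mathsf G|-1$. Paths and cycles are colored graphs whose underlying uncolored edges form a path (with two distinct terminals) or a cycle; an even cycle has an even number of edges. A theta graph is a union $\mathsf P_1\cup\mathsf P_2\cup\mathsf P_3$ of three paths with the same terminals $s\neq t$ such that any two of them share no vertex other than $s,t$ and no underlying uncolored edge. A bad piece is an almost rainbow theta graph with at least $6$ vertices that is the union of three rainbow paths $\mathsf P_1,\mathsf P_2,\mathsf P_3$ as in the definition of a theta graph. *)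

theory Defs
  imports Main
begin

type_synonym ('v,'c) cgraph = "('v set \<times> 'c) set"

definition colored_graph :: "('v,'c) cgraph \<Rightarrow> bool" where
  "colored_graph G \<longleftrightarrow> finite G \<and> (\<forall>p\<in>G. card (fst p) = 2)
     \<and> (\<forall>p\<in>G. \<forall>q\<in>G. fst p = fst q \<longrightarrow> p = q)"

definition Vs :: "('v,'c) cgraph \<Rightarrow> 'v set" where
  "Vs G = \<Union> (fst ` G)"

definition Es :: "('v,'c) cgraph \<Rightarrow> 'v set set" where
  "Es G = fst ` G"

definition colors :: "('v,'c) cgraph \<Rightarrow> 'c set" where
  "colors G = snd ` G"

definition rainbow :: "('v,'c) cgraph \<Rightarrow> bool" where
  "rainbow G \<longleftrightarrow> card (colors G) = card G"

definition almost_rainbow :: "('v,'c) cgraph \<Rightarrow> bool" where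
  "almost_rainbow G \<longleftrightarrow> card (colors G) + 1 = card G"

definition is_path :: "('v,'c) cgraph \<Rightarrow> 'v \<Rightarrow> 'v \<Rightarrow> bool" where
  "is_path G s t \<longleftrightarrow> colored_graph G \<and> s \<noteq> t \<and>
     (\<exists>vs. distinct vs \<and> length vs \<ge> 2 \<and> hd vs = s \<and> last vs = t \<and>
        Es G = {{vs ! i, vs ! (i+1)} | i. i + 1 < length vs})"

definition is_cycle :: "('v,'c) cgraph \<Rightarrow> bool" where
  "is_cycle G \<longleftrightarrow> colored_graph G \<and>
     (\<exists>vs. distinct vs \<and> length vs \<ge> 3 \<and>
        Es G = {{vs ! i, vs ! ((i+1) mod length vs)} | i. i < length vs})"

definition even_cycle :: "('v,'c) cgraph \<Rightarrow> bool" where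
  "even_cycle G \<longleftrightarrow> is_cycle G \<and> even (card G)"

definition theta_of :: "('v,'c) cgraph \<Rightarrow> ('v,'c) cgraph \<Rightarrow> ('v,'c) cgraph \<Rightarrow> ('v,'c) cgraph \<Rightarrow> bool" where
  "theta_of G P1 P2 P3 \<longleftrightarrow> G = P1 \<union> P2 \<union> P3 \<and>
     (\<exists>s t. s \<noteq> t \<and> is_path P1 s t \<and> is_path P2 s t \<and> is_path P3 s t \<and>
        Vs P1 \<inter> Vs P2 \<subseteq> {s,t} \<and> Vs P1 \<inter> Vs P3 \<subseteq> {s,t} \<and> Vs P2 \<inter> Vs P3 \<subseteq> {s,t} \<and>
        Es P1 \<inter> Es P2 = {} \<and> Es P1 \<inter> Es P3 = {} \<and> Es P2 \<inter> Es P3 = {})"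

definition theta_graph :: "('v,'c) cgraph \<Rightarrow> bool" where
  "theta_graph G \<longleftrightarrow> (\<exists>P1 P2 P3. theta_of G P1 P2 P3)"

definition bad_piece :: "('v,'c) cgraph \<Rightarrow> bool" where
  "bad_piece G \<longleftrightarrow> almost_rainbow G \<and> card (Vs G) \<ge> 6 \<and>
     (\<exists>P1 P2 P3. theta_of G P1 P2 P3 \<and> rainbow P1 \<and> rainbow P2 \<and> rainbow P3)"

end

theory Submission
  imports Defs
begin


fun pe :: "'v list \<Rightarrow> 'v set set" where
  "pe (x # y # r) = insert {x,y} (pe (y # r))"
| "pe _ = {}"

definition ce :: "'v list \<Rightarrow> 'v set set" where
  "ce zs = {{zs ! i, zs ! ((i+1) mod length zs)} | i. i < length zs}"

lemma pe_nth: "pe xs = {{xs ! i, xs ! (i+1)} | i. i + 1 < length xs}"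
proof (induction xs rule: pe.induct)
  case (1 x y r)
  have "{{(x#y#r) ! i, (x#y#r) ! (i+1)} | i. i + 1 < length (x#y#r)}
      = insert {x,y} {{(y#r) ! i, (y#r) ! (i+1)} | i. i + 1 < length (y#r)}"
  proof (rule set_eqI, rule iffI)
    fix e assume "e \<in> {{(x#y#r) ! i, (x#y#r) ! (i+1)} | i. i + 1 < length (x#y#r)}"
    then obtain i where i: "e = {(x#y#r) ! i, (x#y#r) ! (i+1)}" "i + 1 < length (x#y#r)" by blast
    show "e \<in> insert {x,y} {{(y#r) ! i, (y#r) ! (i+1)} | i. i + 1 < length (y#r)}"
    proof (cases i)
      case 0 then show ?thesis using i by simp
    next
      case (Suc j) then show ?thesis using i by auto
    qed
  next
    fix e assume "e \<in> insert {x,y} {{(y#r) ! i, (y#r) ! (i+1)} | i. i + 1 < length (y#r)}"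
    then show "e \<in> {{(x#y#r) ! i, (x#y#r) ! (i+1)} | i. i + 1 < length (x#y#r)}"
    proof
      assume "e = {x,y}" then show ?thesis by (intro CollectI exI[where x=0]) auto
    next
      assume "e \<in> {{(y#r) ! i, (y#r) ! (i+1)} | i. i + 1 < length (y#r)}"
      then obtain i where "e = {(y#r) ! i, (y#r) ! (i+1)}" "i + 1 < length (y#r)" by blast
      then show ?thesis by (intro CollectI exI[where x="Suc i"]) auto
    qed
  qed
  then show ?case using 1 by simp
qed auto

lemma pe_single[simp]: "pe [a] = {}" by simp
lemma pe_Nil[simp]: "pe [] = {}" by simp
lemma pe_pair: "pe [a,b] = {{a,b}}" by simp

lemma pe_append: "pe (xs @ ys) = pe xs \<union> pe ys \<union> (if xs \<noteq> [] \<and> ys \<noteq> [] then {{last xs, hd ys}} else {})"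
proof (induction xs)
  case (Cons x xs) then show ?case by (cases xs; cases ys) auto
qed simp

lemma pe_join: "xs \<noteq> [] \<Longrightarrow> ys \<noteq> [] \<Longrightarrow> last xs = hd ys \<Longrightarrow> pe (xs @ tl ys) = pe xs \<union> pe ys"
  by (cases ys; cases "tl ys") (auto simp: pe_append)

lemma pe_rev: "pe (rev xs) = pe xs"
proof (induction xs rule: pe.induct)
  case (1 x y r)
  have "pe (rev (y#r) @ [x]) = pe (rev (y#r)) \<union> {{y,x}}" by (subst pe_append) simp
  then show ?case using 1 by (simp add: insert_commute)
qed auto

lemma pe_subset_set: "e \<in> pe xs \<Longrightarrow> e \<subseteq> set xs"
  by (induction xs rule: pe.induct) auto

lemma pe_card2: "distinct xs \<Longrightarrow> e \<in> pe xs \<Longrightarrow> card e = 2"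
  by (induction xs rule: pe.induct) auto

lemma card_pe: "distinct xs \<Longrightarrow> card (pe xs) = length xs - 1"
proof (induction xs rule: pe.induct)
  case (1 x y r)
  have "{x,y} \<notin> pe (y#r)" using 1(2) pe_subset_set by fastforce
  moreover have "finite (pe (y#r))" by (simp add: pe_nth)
  ultimately show ?case using 1 by simp
qed auto

lemma finite_pe: "finite (pe xs)" by (induction xs rule: pe.induct) auto

lemma Union_pe: "length xs \<ge> 2 \<Longrightarrow> \<Union> (pe xs) = set xs"
proof (induction xs rule: pe.induct)
  case (1 x y r) then show ?case by (cases r) auto
qed auto

lemma ce_pe: "zs \<noteq> [] \<Longrightarrow> ce zs = pe (zs @ [hd zs])"
proof -
  assume ne: "zs \<noteq> []"
  let ?n = "length zs"
  show ?thesis unfolding ce_def pe_nth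
  proof (rule set_eqI, rule iffI)
    fix e assume "e \<in> {{zs ! i, zs ! ((i+1) mod ?n)} | i. i < ?n}"
    then obtain i where i: "e = {zs ! i, zs ! ((i+1) mod ?n)}" "i < ?n" by blast
    show "e \<in> {{(zs @ [hd zs]) ! i, (zs @ [hd zs]) ! (i+1)} | i. i + 1 < length (zs @ [hd zs])}"
    proof (cases "i + 1 < ?n")
      case True then show ?thesis using i by (intro CollectI exI[where x=i]) (auto simp: nth_append)
    next
      case False then have "i + 1 = ?n" using i by simp
      then show ?thesis using i ne by (intro CollectI exI[where x=i]) (auto simp: nth_append hd_conv_nth)
    qed
  next
    fix e assume "e \<in> {{(zs @ [hd zs]) ! i, (zs @ [hd zs]) ! (i+1)} | i. i + 1 < length (zs @ [hd zs])}"
    then obtain i where i: "e = {(zs @ [hd zs]) ! i, (zs @ [hd zs]) ! (i+1)}" "i + 1 < length (zs @ [hd zs])" by blast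
    show "e \<in> {{zs ! i, zs ! ((i+1) mod ?n)} | i. i < ?n}"
    proof (cases "i + 1 < ?n")
      case True then show ?thesis using i by (intro CollectI exI[where x=i]) (auto simp: nth_append)
    next
      case False then have "i + 1 = ?n" using i by simp
      then show ?thesis using i ne by (intro CollectI exI[where x=i]) (auto simp: nth_append hd_conv_nth)
    qed
  qed
qed


lemma card_ce: assumes "distinct zs" "length zs \<ge> 3" shows "card (ce zs) = length zs"
proof -
  let ?n = "length zs"
  have ne: "zs \<noteq> []" using assms by auto
  have ce: "ce zs = pe zs \<union> {{last zs, hd zs}}" using ne by (simp add: ce_pe pe_append)
  have "{last zs, hd zs} \<notin> pe zs"
  proof
    assume "{last zs, hd zs} \<in> pe zs"
    then obtain i where i: "{last zs, hd zs} = {zs ! i, zs ! (i+1)}" "i + 1 < ?n" by (auto simp: pe_nth)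
    have l: "last zs = zs ! (?n - 1)" using ne by (simp add: last_conv_nth)
    have h: "hd zs = zs ! 0" using ne by (simp add: hd_conv_nth)
    have inj: "\<And>a b. a < ?n \<Longrightarrow> b < ?n \<Longrightarrow> zs ! a = zs ! b \<Longrightarrow> a = b"
      using assms(1) nth_eq_iff_index_eq by blast
    from i(1) have "(zs ! (?n-1) = zs ! i \<and> zs ! 0 = zs ! (i+1)) \<or> (zs ! (?n-1) = zs ! (i+1) \<and> zs ! 0 = zs ! i)"
      unfolding l h by (auto simp: doubleton_eq_iff)
    then show False
    proof
      assume "zs ! (?n-1) = zs ! i \<and> zs ! 0 = zs ! (i+1)"
      then have "?n - 1 = i" using inj i(2) by (metis add_lessD1 diff_less ne length_greater_0_conv zero_less_one)
      then show False using i(2) by simp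
    next
      assume a: "zs ! (?n-1) = zs ! (i+1) \<and> zs ! 0 = zs ! i"
      then have "?n - 1 = i + 1" using inj i(2) by (metis diff_less ne length_greater_0_conv zero_less_one)
      moreover have "0 = i" using inj i(2) a by (metis add_lessD1 ne length_greater_0_conv)
      ultimately show False using assms(2) by simp
    qed
  qed
  then show ?thesis using ce card_pe[OF assms(1)] finite_pe[of zs] assms(2) by simp
qed

lemma ce_rotate1: "ce (rotate1 zs) = ce zs"
proof (cases zs)
  case Nil then show ?thesis by simp
next
  case (Cons x r)
  show ?thesis
  proof (cases r)
    case Nil then show ?thesis using Cons by simp
  next
    case (Cons y r')
    have rne: "r \<noteq> []" using Cons by simp
    have pxr: "pe (x # r) = insert {x, hd r} (pe r)" using Cons by simp
    have e1: "ce (rotate1 zs) = pe ((r @ [x]) @ [hd r])" using \<open>zs = x # r\<close> rne by (simp add: ce_pe)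
    have e2: "pe ((r @ [x]) @ [hd r]) = pe r \<union> {{last r, x}} \<union> {{x, hd r}}" using rne by (simp del: pe.simps add: pe_append pe_pair) blast
    have e3: "pe ((x # r) @ [x]) = pe r \<union> {{last r, x}} \<union> {{x, hd r}}" using pe_append[of "x#r" "[x]"] rne pxr by (simp del: pe.simps) blast
    have e4: "ce zs = pe ((x # r) @ [x])" using \<open>zs = x # r\<close> by (simp add: ce_pe)
    show ?thesis using e1 e2 e3 e4 by simp
  qed
qed

lemma ce_rotate: "ce (rotate k zs) = ce zs"
  by (induction k) (simp_all add: ce_rotate1)

lemma Union_ce: "length zs \<ge> 2 \<Longrightarrow> \<Union> (ce zs) = set zs"
proof -
  assume a: "length zs \<ge> 2"
  then have "zs \<noteq> []" by auto
  then have "\<Union> (ce zs) = set (zs @ [hd zs])" using a by (simp add: ce_pe Union_pe)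
  also have "\<dots> = set zs" using \<open>zs \<noteq> []\<close> by auto
  finally show ?thesis .
qed

lemma glue:
  assumes "distinct xs" "distinct ys" "length xs \<ge> 2" "length ys \<ge> 2"
    "last xs = hd ys" "last ys = hd xs" "set xs \<inter> set ys \<subseteq> {hd xs, hd ys}"
    "pe xs \<inter> pe ys = {}"
  shows "distinct (xs @ butlast (tl ys)) \<and> length (xs @ butlast (tl ys)) \<ge> 3 \<and>
     ce (xs @ butlast (tl ys)) = pe xs \<union> pe ys \<and>
     length (xs @ butlast (tl ys)) + 2 = length xs + length ys"
proof -
  obtain b r where ys: "ys = b # r" using assms(4) by (cases ys) auto
  have rne: "r \<noteq> []" using assms(4) ys by auto
  have r: "r = butlast r @ [last r]" using rne by simp
  have dys: "distinct (b # butlast r @ [last r])" using assms(2) ys r by metis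
  have d1: "distinct (butlast (tl ys))" using assms(2) ys by (simp add: distinct_butlast)
  have d2: "set xs \<inter> set (butlast (tl ys)) = {}"
  proof -
    have "set (butlast r) \<subseteq> set ys" using ys by (auto dest: in_set_butlastD)
    moreover have "hd xs \<notin> set (butlast r)" "hd ys \<notin> set (butlast r)"
      using dys assms(6) ys rne by (auto simp: last_conv_nth)
    ultimately show ?thesis using assms(7) ys by auto
  qed
  have len: "length (xs @ butlast (tl ys)) + 2 = length xs + length ys" using ys rne assms(3) by simp
  have l3: "length (xs @ butlast (tl ys)) \<ge> 3"
  proof (rule ccontr)
    assume "\<not> ?thesis"
    then have "length xs = 2" "length ys = 2" using len assms(3,4) by auto
    then obtain a1 a2 c1 c2 where "xs = [a1,a2]" "ys = [c1,c2]"
      by (metis (no_types, lifting) One_nat_def Suc_1 length_0_conv length_Suc_conv)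
    then show False using assms(5,6,8) by (auto simp: insert_commute)
  qed
  have xne: "xs \<noteq> []" using assms(3) by auto
  have "hd (xs @ butlast (tl ys)) = last r" using xne assms(6) ys rne by simp
  then have "(xs @ butlast (tl ys)) @ [hd (xs @ butlast (tl ys))] = xs @ tl ys"
    using ys rne by simp
  then have "ce (xs @ butlast (tl ys)) = pe (xs @ tl ys)" using xne by (simp add: ce_pe)
  also have "\<dots> = pe xs \<union> pe ys" by (rule pe_join) (use xne assms(5) ys in auto)
  finally show ?thesis using len l3 d1 d2 assms(1) by simp
qed



definition sub :: "('v,'c) cgraph \<Rightarrow> 'v set set \<Rightarrow> ('v,'c) cgraph" where
  "sub G S = {p \<in> G. fst p \<in> S}"

lemma sub_subset: "sub G S \<subseteq> G" by (auto simp: sub_def)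

lemma sub_mono: "S \<subseteq> T \<Longrightarrow> sub G S \<subseteq> sub G T" by (auto simp: sub_def)

lemma cg_sub: "colored_graph G \<Longrightarrow> colored_graph (sub G S)"
  unfolding colored_graph_def sub_def by auto

lemma Es_sub: "S \<subseteq> Es G \<Longrightarrow> Es (sub G S) = S"
  unfolding Es_def sub_def by force

lemma card_cg: "colored_graph G \<Longrightarrow> card (Es G) = card G"
  unfolding colored_graph_def Es_def by (metis card_image inj_onI)

lemma rainbow_inj: "finite G \<Longrightarrow> rainbow G \<longleftrightarrow> inj_on snd G"
  unfolding rainbow_def colors_def by (simp add: inj_on_iff_eq_card)

lemma Vs_Es: "Vs G = \<Union> (Es G)" by (simp add: Vs_def Es_def)

lemma cycle_of:
  assumes "colored_graph G" "distinct zs" "length zs \<ge> 3" "ce zs \<subseteq> Es G"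
  shows "is_cycle (sub G (ce zs)) \<and> card (sub G (ce zs)) = length zs"
proof -
  have E: "Es (sub G (ce zs)) = ce zs" using assms(4) by (rule Es_sub)
  have cg: "colored_graph (sub G (ce zs))" using assms(1) by (rule cg_sub)
  have "is_cycle (sub G (ce zs))" unfolding is_cycle_def
    using cg E assms(2,3) unfolding ce_def by blast
  moreover have "card (sub G (ce zs)) = length zs"
    using card_cg[OF cg] E card_ce[OF assms(2,3)] by simp
  ultimately show ?thesis by simp
qed

lemma mk_even_ce:
  assumes "colored_graph G" "distinct zs" "length zs \<ge> 3" "ce zs \<subseteq> Es G"
    "even (length zs)" "inj_on snd (sub G (ce zs))"
  shows "\<exists>D. D \<subseteq> G \<and> even_cycle D \<and> rainbow D"
proof (intro exI conjI)
  show "sub G (ce zs) \<subseteq> G" by (rule sub_subset)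
  show "even_cycle (sub G (ce zs))" using cycle_of[OF assms(1-4)] assms(5)
    by (simp add: even_cycle_def)
  have "finite (sub G (ce zs))" using assms(1) sub_subset unfolding colored_graph_def
    by (meson finite_subset)
  then show "rainbow (sub G (ce zs))" using assms(6) rainbow_inj by blast
qed

lemma mk_even_glue:
  assumes "colored_graph G"
    "distinct xs" "distinct ys" "length xs \<ge> 2" "length ys \<ge> 2"
    "last xs = hd ys" "last ys = hd xs" "set xs \<inter> set ys \<subseteq> {hd xs, hd ys}"
    "pe xs \<inter> pe ys = {}"
    "pe xs \<union> pe ys \<subseteq> Es G" "even (length xs + length ys)"
    "inj_on snd (sub G (pe xs \<union> pe ys))"
  shows "\<exists>D. D \<subseteq> G \<and> even_cycle D \<and> rainbow D"
proof -
  let ?zs = "xs @ butlast (tl ys)"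
  have g: "distinct ?zs \<and> length ?zs \<ge> 3 \<and> ce ?zs = pe xs \<union> pe ys \<and> length ?zs + 2 = length xs + length ys"
    using glue[OF assms(2-9)] .
  show ?thesis
    apply (rule mk_even_ce[OF assms(1), of ?zs])
    using g assms(10-12) by auto
qed



lemma last_take_nth: "j < length xs \<Longrightarrow> last (take (Suc j) xs) = xs ! j"
  by (simp add: take_Suc_conv_app_nth)

lemma split_cycle:
  assumes "distinct zs" "length zs \<ge> 3" "u \<in> set zs" "v \<in> set zs" "u \<noteq> v"
  obtains Q1 Q2 where "distinct Q1" "distinct Q2" "length Q1 \<ge> 2" "length Q2 \<ge> 2"
    "hd Q1 = u" "last Q1 = v" "hd Q2 = v" "last Q2 = u"
    "set Q1 \<subseteq> set zs" "set Q2 \<subseteq> set zs" "pe Q1 \<union> pe Q2 = ce zs"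
    "length Q1 + length Q2 = length zs + 2"
proof -
  let ?n = "length zs"
  obtain i where i: "i < ?n" "zs ! i = u" using assms(3) by (auto simp: in_set_conv_nth)
  define zs' where "zs' = rotate i zs"
  have L: "length zs' = ?n" "distinct zs'" "set zs' = set zs" "ce zs' = ce zs"
    using assms(1) by (auto simp: zs'_def ce_rotate)
  have z0: "zs' ! 0 = u" using i assms(2) nth_rotate[of 0 zs i] by (force simp: zs'_def)
  obtain j where j: "j < ?n" "zs' ! j = v" using assms(4) L(3) L(1) by (metis in_set_conv_nth)
  have j0: "j \<noteq> 0" using j z0 assms(5) by (metis)
  define Q1 where "Q1 = take (j+1) zs'"
  define Q2 where "Q2 = drop j zs' @ [u]"
  have uQ: "u \<notin> set (drop j zs')"
  proof
    assume "u \<in> set (drop j zs')"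
    then obtain k where "k < ?n - j" "drop j zs' ! k = u" using L(1) by (auto simp: in_set_conv_nth)
    then have "zs' ! (j + k) = zs' ! 0" "j + k < ?n" using z0 L(1) by auto
    then have "j + k = 0" using L(2) L(1) assms(2) nth_eq_iff_index_eq by fastforce
    then show False using j0 by simp
  qed
  have "distinct Q1" using L(2) by (simp add: Q1_def)
  moreover have "distinct Q2" using L(2) uQ by (simp add: Q2_def)
  moreover have "length Q1 \<ge> 2" using j j0 L(1) by (simp add: Q1_def)
  moreover have "length Q2 \<ge> 2" using j L(1) by (simp add: Q2_def)
  moreover have "hd Q1 = u"
  proof -
    have ne: "zs' \<noteq> []" using L(1) assms(2) by auto
    have hz: "hd zs' = u" using z0 ne by (simp add: hd_conv_nth)
    then show ?thesis by (simp add: Q1_def)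
  qed
  moreover have "last Q1 = v" using j L(1) by (simp add: Q1_def last_take_nth)
  moreover have "hd Q2 = v" using j L(1) by (simp add: Q2_def hd_drop_conv_nth)
  moreover have "last Q2 = u" by (simp add: Q2_def)
  moreover have "set Q1 \<subseteq> set zs" using L(3) set_take_subset by (metis Q1_def)
  moreover have "set Q2 \<subseteq> set zs" using L(3) set_drop_subset assms(3) by (auto simp: Q2_def dest: in_set_dropD)
  moreover have "pe Q1 \<union> pe Q2 = ce zs"
  proof -
    have ne: "zs' \<noteq> []" using L(1) assms(2) by auto
    have hz: "hd zs' = u" using z0 ne by (simp add: hd_conv_nth)
    have "tl Q2 = drop (j+1) zs' @ [u]" using j L(1) by (simp add: Q2_def drop_Suc tl_drop)
    then have "Q1 @ tl Q2 = zs' @ [hd zs']" using hz by (simp add: Q1_def)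
    moreover have "pe (Q1 @ tl Q2) = pe Q1 \<union> pe Q2"
      by (rule pe_join) (use \<open>length Q1 \<ge> 2\<close> \<open>length Q2 \<ge> 2\<close> \<open>last Q1 = v\<close> \<open>hd Q2 = v\<close> in auto)
    ultimately show ?thesis using ce_pe[OF ne] L(4) by simp
  qed
  moreover have "length Q1 + length Q2 = ?n + 2" using j L(1) by (simp add: Q1_def Q2_def)
  ultimately show ?thesis using that by blast
qed

lemma par_aux2:
  fixes a b c n :: nat
  assumes "a + c + (c + b) = n + 2 + 2*c" "odd (c + b)" "odd n"
  shows "even (a + c)"
  using assms by presburger

lemma cyc_case:
  assumes "colored_graph G" "distinct zs" "length zs \<ge> 3" "ce zs \<subseteq> Es G"
    "distinct ear" "length ear \<ge> 2" "hd ear \<in> set zs" "last ear \<in> set zs" "hd ear \<noteq> last ear"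
    "set ear \<inter> set zs \<subseteq> {hd ear, last ear}"
    "pe ear \<inter> ce zs = {}" "pe ear \<subseteq> Es G"
    "inj_on snd (sub G (ce zs \<union> pe ear))"
  shows "\<exists>D. D \<subseteq> G \<and> even_cycle D \<and> rainbow D"
proof (cases "even (length zs)")
  case True
  show ?thesis
    by (rule mk_even_ce[OF assms(1-4) True]) (rule inj_on_subset[OF assms(13)], rule sub_mono, blast)
next
  case False
  obtain Q1 Q2 where Q: "distinct Q1" "distinct Q2" "length Q1 \<ge> 2" "length Q2 \<ge> 2"
    "hd Q1 = hd ear" "last Q1 = last ear" "hd Q2 = last ear" "last Q2 = hd ear"
    "set Q1 \<subseteq> set zs" "set Q2 \<subseteq> set zs" "pe Q1 \<union> pe Q2 = ce zs"
    "length Q1 + length Q2 = length zs + 2"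
    using split_cycle[OF assms(2,3,7,8,9)] by blast
  have ne: "ear \<noteq> []" using assms(6) by auto
  show ?thesis
  proof (cases "even (length ear + length Q2)")
    case True
    show ?thesis
    proof (rule mk_even_glue[OF assms(1,5) Q(2) assms(6) Q(4)])
      show "last ear = hd Q2" "last Q2 = hd ear" using Q by auto
      show "set ear \<inter> set Q2 \<subseteq> {hd ear, hd Q2}" using assms(10) Q by auto
      show "pe ear \<inter> pe Q2 = {}" using assms(11) Q(11) by auto
      show "pe ear \<union> pe Q2 \<subseteq> Es G" using assms(4,12) Q(11) by auto
      show "even (length ear + length Q2)" by fact
      show "inj_on snd (sub G (pe ear \<union> pe Q2))"
        by (rule inj_on_subset[OF assms(13)], rule sub_mono) (use Q(11) in auto)
    qed
  next
    case odd: False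
    have "length Q1 + length ear + (length ear + length Q2) = length zs + 2 + 2*length ear" using Q(12) by simp
    then have "even (length Q1 + length ear)" using odd False by (intro par_aux2) auto
    then have ev: "even (length Q1 + length (rev ear))" by simp
    show ?thesis
    proof (rule mk_even_glue[OF assms(1) Q(1)])
      show "distinct (rev ear)" "length (rev ear) \<ge> 2" using assms(5,6) by auto
      show "last Q1 = hd (rev ear)" "last (rev ear) = hd Q1" using Q ne by (auto simp: hd_rev last_rev)
      show "set Q1 \<inter> set (rev ear) \<subseteq> {hd Q1, hd (rev ear)}" using assms(10) Q ne by (auto simp: hd_rev)
      show "pe Q1 \<inter> pe (rev ear) = {}" using assms(11) Q(11) by (auto simp: pe_rev)
      show "pe Q1 \<union> pe (rev ear) \<subseteq> Es G" using assms(4,12) Q(11) by (auto simp: pe_rev)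
      show "even (length Q1 + length (rev ear))" by fact
      show "inj_on snd (sub G (pe Q1 \<union> pe (rev ear)))"
        by (rule inj_on_subset[OF assms(13)], rule sub_mono) (use Q(11) in \<open>auto simp: pe_rev\<close>)
    qed (use Q in auto)
  qed
qed



lemma pjoin:
  assumes "distinct xs" "distinct ys" "xs \<noteq> []" "ys \<noteq> []" "last xs = hd ys"
    "set xs \<inter> set ys \<subseteq> {hd ys}"
  shows "distinct (xs @ tl ys)" "pe (xs @ tl ys) = pe xs \<union> pe ys"
    "set (xs @ tl ys) = set xs \<union> set ys" "hd (xs @ tl ys) = hd xs" "last (xs @ tl ys) = last ys"
    "length (xs @ tl ys) + 1 = length xs + length ys"
proof -
  obtain b r where ys: "ys = b # r" using assms(4) by (cases ys) auto
  show "distinct (xs @ tl ys)" using assms(1,2,6) ys by auto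
  show "pe (xs @ tl ys) = pe xs \<union> pe ys" using pe_join assms(3,4,5) by blast
  show "set (xs @ tl ys) = set xs \<union> set ys" using assms(3,5) ys by (auto simp: last_in_set dest: last_in_set)
  show "hd (xs @ tl ys) = hd xs" using assms(3) by simp
  show "last (xs @ tl ys) = last ys" using assms(3,5) ys by (cases r) auto
  show "length (xs @ tl ys) + 1 = length xs + length ys" using ys by simp
qed

lemma split_path:
  assumes "distinct xs" "u \<in> set xs" "u \<noteq> hd xs" "u \<noteq> last xs"
  obtains A B where "distinct A" "distinct B" "length A \<ge> 2" "length B \<ge> 2"
    "hd A = hd xs" "last A = u" "hd B = u" "last B = last xs"
    "set A \<union> set B = set xs" "set A \<inter> set B = {u}" "pe A \<union> pe B = pe xs" "pe A \<inter> pe B = {}"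
    "length A + length B = length xs + 1" "last xs \<notin> set A" "hd xs \<notin> set B"
proof -
  obtain i where i: "i < length xs" "xs ! i = u" using assms(2) by (auto simp: in_set_conv_nth)
  have ne: "xs \<noteq> []" using assms(2) by auto
  have i0: "i \<noteq> 0" using i assms(3) ne by (metis hd_conv_nth)
  have il: "i \<noteq> length xs - 1" using i assms(4) ne by (metis last_conv_nth)
  define A where "A = take (i+1) xs"
  define B where "B = drop i xs"
  have dA: "distinct A" "distinct B" using assms(1) by (auto simp: A_def B_def)
  have lA: "length A \<ge> 2" "length B \<ge> 2" using i i0 il by (auto simp: A_def B_def)
  have hA: "hd A = hd xs" using ne by (simp add: A_def)
  have lsA: "last A = u" using i by (simp add: A_def last_take_nth)
  have hB: "hd B = u" using i by (simp add: B_def hd_drop_conv_nth)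
  have lB: "last B = last xs" using i by (simp add: B_def)
  have tB: "tl B = drop (Suc i) xs" by (simp add: B_def drop_Suc tl_drop)
  have xs: "xs = A @ tl B" unfolding tB A_def by simp
  have sAB: "set A \<inter> set B = {u}"
  proof -
    have "set A \<inter> set (tl B) = {}" using assms(1) xs by (metis distinct_append)
    moreover have "set B = insert u (set (tl B))" using lA hB by (cases B) auto
    moreover have "u \<in> set A" using lsA lA by (metis last_in_set list.size(3) not_numeral_le_zero)
    ultimately show ?thesis by auto
  qed
  have neA: "A \<noteq> []" "B \<noteq> []" using lA by auto
  have J: "pe (A @ tl B) = pe A \<union> pe B" "set (A @ tl B) = set A \<union> set B"
    using pjoin(2,3)[OF dA neA] lsA hB sAB by auto
  have "pe A \<inter> pe B = {}"
  proof (rule ccontr)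
    assume "pe A \<inter> pe B \<noteq> {}"
    then obtain e where e: "e \<in> pe A" "e \<in> pe B" by blast
    then have "e \<subseteq> {u}" using pe_subset_set sAB by blast
    moreover have "card e = 2" using pe_card2 dA e by blast
    ultimately show False using card_mono[of "{u}" e] by simp
  qed
  moreover have "length A + length B = length xs + 1" using i by (simp add: A_def B_def)
  moreover have "last xs \<notin> set A"
  proof
    assume "last xs \<in> set A"
    moreover have "last xs \<in> set B" using lB lA by (metis last_in_set list.size(3) not_numeral_le_zero)
    ultimately show False using sAB assms(4) by auto
  qed
  moreover have "hd xs \<notin> set B"
  proof
    assume "hd xs \<in> set B"
    moreover have "hd xs \<in> set A" using hA lA by (metis hd_in_set list.size(3) not_numeral_le_zero)
    ultimately show False using sAB assms(3) by auto
  qed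
  ultimately show ?thesis using dA lA hA lsA hB lB sAB J xs by (intro that) auto
qed



lemma mk2:
  assumes "colored_graph G"
    "distinct xs" "distinct ys" "length xs \<ge> 2" "length ys \<ge> 2"
    "last xs = hd ys" "last ys = hd xs" "set xs \<inter> set ys \<subseteq> {hd xs, hd ys}"
    "pe xs \<inter> pe ys = {}"
    "pe xs \<union> pe ys \<subseteq> Es G" "even (length xs + length ys)"
    "inj_on snd (G - {e1})" "inj_on snd (G - {e2})"
    "fst e1 \<notin> pe xs \<union> pe ys \<or> fst e2 \<notin> pe xs \<union> pe ys"
  shows "\<exists>D. D \<subseteq> G \<and> even_cycle D \<and> rainbow D"
proof (rule mk_even_glue[OF assms(1-11)])
  show "inj_on snd (sub G (pe xs \<union> pe ys))"
  proof (cases "fst e1 \<notin> pe xs \<union> pe ys")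
    case True
    have "sub G (pe xs \<union> pe ys) \<subseteq> G - {e1}" using True by (auto simp: sub_def)
    then show ?thesis using assms(12) inj_on_subset by blast
  next
    case False
    then have "sub G (pe xs \<union> pe ys) \<subseteq> G - {e2}" using assms(14) by (auto simp: sub_def)
    then show ?thesis using assms(13) inj_on_subset by blast
  qed
qed

lemma par_aux:
  fixes xaa xbb xab xba a1 b1 a2 b2 p n1 n2 n3 :: nat
  assumes "xaa + 1 = a1 + p" "xbb + 1 = b1 + p" "xab + 2 = a1 + p + b2" "xba + 2 = b1 + p + a2"
    "a1 + b1 = n1 + 1" "a2 + b2 = n2 + 1" "odd (n1 + n3)" "odd (n2 + n3)"
  shows "(even (xaa + a2) \<and> even (xbb + b2)) \<or> (even (xab + n3) \<and> even (xba + n3))"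
  using assms by presburger

lemma caseC:
  assumes G: "colored_graph G"
   and d: "distinct xs1" "distinct xs2" "distinct xs3"
   and l: "length xs1 \<ge> 2" "length xs2 \<ge> 2" "length xs3 \<ge> 2"
   and h: "hd xs1 = s" "hd xs2 = s" "hd xs3 = s"
   and t: "last xs1 = t" "last xs2 = t" "last xs3 = t"
   and vi: "set xs1 \<inter> set xs2 \<subseteq> {s,t}" "set xs1 \<inter> set xs3 \<subseteq> {s,t}" "set xs2 \<inter> set xs3 \<subseteq> {s,t}"
   and ei: "pe xs1 \<inter> pe xs2 = {}" "pe xs1 \<inter> pe xs3 = {}" "pe xs2 \<inter> pe xs3 = {}"
   and EG: "pe xs1 \<union> pe xs2 \<union> pe xs3 \<subseteq> Es G"
   and ear: "distinct ear" "length ear \<ge> 2"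
     "\<forall>x\<in>set ear. x \<in> set xs1 \<union> set xs2 \<union> set xs3 \<longrightarrow> x = hd ear \<or> x = last ear"
     "pe ear \<inter> (pe xs1 \<union> pe xs2 \<union> pe xs3) = {}" "pe ear \<subseteq> Es G"
   and uv: "hd ear \<in> set xs1" "hd ear \<notin> set xs2" "hd ear \<notin> set xs3"
     "last ear \<in> set xs2" "last ear \<notin> set xs1" "last ear \<notin> set xs3"
   and e: "fst e1 \<in> pe xs1" "fst e2 \<in> pe xs2" "inj_on snd (G - {e1})" "inj_on snd (G - {e2})"
   and par: "odd (length xs1 + length xs3)" "odd (length xs2 + length xs3)"
  shows "\<exists>D. D \<subseteq> G \<and> even_cycle D \<and> rainbow D"
proof -
  define u where "u = hd ear"
  define v where "v = last ear"
  have ne1: "xs1 \<noteq> []" "xs2 \<noteq> []" "xs3 \<noteq> []" "ear \<noteq> []" using l ear(2) by auto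
  have sx3: "s \<in> set xs3" "t \<in> set xs3" using h t ne1 by (metis hd_in_set last_in_set)+
  have uv': "u \<noteq> hd xs1" "u \<noteq> last xs1" "v \<noteq> hd xs2" "v \<noteq> last xs2"
    using uv sx3 h t unfolding u_def v_def by auto
  obtain A1 B1 where S1: "distinct A1" "distinct B1" "length A1 \<ge> 2" "length B1 \<ge> 2"
    "hd A1 = s" "last A1 = u" "hd B1 = u" "last B1 = t"
    "set A1 \<union> set B1 = set xs1" "set A1 \<inter> set B1 = {u}" "pe A1 \<union> pe B1 = pe xs1" "pe A1 \<inter> pe B1 = {}"
    "length A1 + length B1 = length xs1 + 1" "t \<notin> set A1" "s \<notin> set B1"
    using split_path[OF d(1) uv(1)[folded u_def] uv'(1,2)] h t by metis
  obtain A2 B2 where S2: "distinct A2" "distinct B2" "length A2 \<ge> 2" "length B2 \<ge> 2"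
    "hd A2 = s" "last A2 = v" "hd B2 = v" "last B2 = t"
    "set A2 \<union> set B2 = set xs2" "set A2 \<inter> set B2 = {v}" "pe A2 \<union> pe B2 = pe xs2" "pe A2 \<inter> pe B2 = {}"
    "length A2 + length B2 = length xs2 + 1" "t \<notin> set A2" "s \<notin> set B2"
    using split_path[OF d(2) uv(4)[folded v_def] uv'(3,4)] h t by metis
  have neA: "A1 \<noteq> []" "B1 \<noteq> []" "A2 \<noteq> []" "B2 \<noteq> []" using S1 S2 by auto
  have hu: "hd ear = u" "last ear = v" by (simp_all add: u_def v_def)
  have sear: "\<And>x. x \<in> set ear \<Longrightarrow> x \<in> set xs1 \<union> set xs2 \<union> set xs3 \<Longrightarrow> x = u \<or> x = v"
    using ear(3) hu by blast
  have uvx: "u \<notin> set xs2" "u \<notin> set xs3" "v \<notin> set xs1" "v \<notin> set xs3"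
    using uv unfolding u_def v_def by auto
  have i1: "set A1 \<inter> set ear \<subseteq> {hd ear}" using sear S1(9) uvx hu by blast
  note P1 = pjoin[OF S1(1) ear(1) neA(1) ne1(4) S1(6)[folded hu(1)] i1]
  have i2: "set (rev B1) \<inter> set ear \<subseteq> {hd ear}" using sear S1(9) uvx hu by auto
  have rB1: "distinct (rev B1)" "rev B1 \<noteq> []" "last (rev B1) = u" "hd (rev B1) = t"
    using S1 neA by (auto simp: last_rev hd_rev)
  note P2 = pjoin[OF rB1(1) ear(1) rB1(2) ne1(4) rB1(3)[folded hu(1)] i2]
  have pA1: "pe A1 \<subseteq> pe xs1" "pe B1 \<subseteq> pe xs1" "pe A2 \<subseteq> pe xs2" "pe B2 \<subseteq> pe xs2"
    using S1(11) S2(11) by auto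
  have sA: "set A1 \<subseteq> set xs1" "set B1 \<subseteq> set xs1" "set A2 \<subseteq> set xs2" "set B2 \<subseteq> set xs2"
    using S1(9) S2(9) by auto
  have rA2: "distinct (rev A2)" "rev A2 \<noteq> []" "hd (rev A2) = v" "last (rev A2) = s" "length (rev A2) \<ge> 2"
    using S2 neA by (auto simp: last_rev hd_rev)
  have rx3: "distinct (rev xs3)" "hd (rev xs3) = t" "last (rev xs3) = s" "length (rev xs3) \<ge> 2"
    using d l h t ne1 by (auto simp: last_rev hd_rev)
  define XAA where "XAA = A1 @ tl ear"
  have AA: "distinct XAA" "pe XAA = pe A1 \<union> pe ear" "set XAA = set A1 \<union> set ear" "hd XAA = s" "last XAA = v"
    "length XAA + 1 = length A1 + length ear"
    using P1 S1 hu unfolding XAA_def by auto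
  define XBB where "XBB = rev B1 @ tl ear"
  have BB: "distinct XBB" "pe XBB = pe B1 \<union> pe ear" "set XBB = set B1 \<union> set ear" "hd XBB = t" "last XBB = v"
    "length XBB + 1 = length B1 + length ear"
    using P2 rB1 hu unfolding XBB_def by (auto simp: pe_rev)
  have i3: "set XAA \<inter> set B2 \<subseteq> {hd B2}"
  proof
    fix x assume x: "x \<in> set XAA \<inter> set B2"
    then have xB: "x \<in> set xs2" using sA by auto
    show "x \<in> {hd B2}"
    proof (cases "x \<in> set A1")
      case True
      then have "x \<in> {s,t}" using xB sA vi(1) by auto
      then show ?thesis using True S1(14) S2(15) x by auto
    next
      case False
      then have "x \<in> set ear" using x AA(3) by auto
      then have "x = u \<or> x = v" using sear xB by auto
      then show ?thesis using uvx xB S2(7) by auto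
    qed
  qed
  have neX: "XAA \<noteq> []" "XBB \<noteq> []" using AA(6) BB(6) S1(3,4) ear(2) by auto
  note P3 = pjoin[OF AA(1) S2(2) neX(1) neA(4) _ i3]
  define XAB where "XAB = XAA @ tl B2"
  have AB: "distinct XAB" "pe XAB = pe A1 \<union> pe ear \<union> pe B2" "set XAB = set A1 \<union> set ear \<union> set B2"
    "hd XAB = s" "last XAB = t" "length XAB + 2 = length A1 + length ear + length B2"
    using P3 AA S2 unfolding XAB_def by auto
  have i4: "set XBB \<inter> set (rev A2) \<subseteq> {hd (rev A2)}"
  proof
    fix x assume x: "x \<in> set XBB \<inter> set (rev A2)"
    then have xB: "x \<in> set xs2" "x \<in> set A2" using sA by auto
    show "x \<in> {hd (rev A2)}"
    proof (cases "x \<in> set B1")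
      case True
      then have "x \<in> {s,t}" using xB sA vi(1) by auto
      then show ?thesis using True S1(15) S2(14) xB by auto
    next
      case False
      then have "x \<in> set ear" using x BB(3) by auto
      then have "x = u \<or> x = v" using sear xB by auto
      then show ?thesis using uvx xB rA2(3) by auto
    qed
  qed
  note P4 = pjoin[OF BB(1) rA2(1) neX(2) rA2(2) _ i4]
  define XBA where "XBA = XBB @ tl (rev A2)"
  have BA: "distinct XBA" "pe XBA = pe B1 \<union> pe ear \<union> pe A2" "set XBA = set B1 \<union> set ear \<union> set A2"
    "hd XBA = t" "last XBA = s" "length XBA + 2 = length B1 + length ear + length A2"
    using P4 BB rA2 unfolding XBA_def by (auto simp: pe_rev)
  have ed: "fst e1 \<notin> pe xs2" "fst e1 \<notin> pe xs3" "fst e1 \<notin> pe ear"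
     "fst e2 \<notin> pe xs1" "fst e2 \<notin> pe xs3" "fst e2 \<notin> pe ear"
    using e ei ear(4) by blast+
  have par2: "(even (length XAA + length (rev A2)) \<and> even (length XBB + length B2)) \<or>
              (even (length XAB + length (rev xs3)) \<and> even (length XBA + length xs3))"
  proof -
    have "(even (length XAA + length A2) \<and> even (length XBB + length B2)) \<or>
              (even (length XAB + length xs3) \<and> even (length XBA + length xs3))"
      by (rule par_aux[OF AA(6) BB(6) AB(6) BA(6) S1(13) S2(13) par])
    then show ?thesis by simp
  qed
  have EGx: "pe A1 \<union> pe B1 \<union> pe A2 \<union> pe B2 \<union> pe xs3 \<union> pe ear \<subseteq> Es G" using EG ear(5) pA1 by auto
  have sv: "set ear \<inter> set A2 \<subseteq> {v}" "set ear \<inter> set B2 \<subseteq> {v}" "set ear \<inter> set xs3 = {}"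
    "set ear \<inter> set A1 \<subseteq> {u}" "set ear \<inter> set B1 \<subseteq> {u}"
    using sear sA uvx by blast+
  have cAA: "\<exists>D. D \<subseteq> G \<and> even_cycle D \<and> rainbow D" if "even (length XAA + length (rev A2))"
      "fst e1 \<notin> pe A1 \<or> fst e2 \<notin> pe A2"
  proof (rule mk2[OF G AA(1) rA2(1) _ rA2(5) _ _ _ _ _ that(1) e(3,4)])
    show "length XAA \<ge> 2" using AA(6) ear(2) S1(3) by simp
    show "last XAA = hd (rev A2)" "last (rev A2) = hd XAA" using AA rA2 by auto
    show "set XAA \<inter> set (rev A2) \<subseteq> {hd XAA, hd (rev A2)}"
      using AA(3,4) rA2(3) sv sA vi S1(14) by auto
    show "pe XAA \<inter> pe (rev A2) = {}" using AA(2) pA1 ei ear(4) by (auto simp: pe_rev)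
    show "pe XAA \<union> pe (rev A2) \<subseteq> Es G" using AA(2) EGx by (auto simp: pe_rev)
    show "fst e1 \<notin> pe XAA \<union> pe (rev A2) \<or> fst e2 \<notin> pe XAA \<union> pe (rev A2)"
      using that(2) AA(2) ed pA1 by (auto simp: pe_rev)
  qed
  have cBB: "\<exists>D. D \<subseteq> G \<and> even_cycle D \<and> rainbow D" if "even (length XBB + length B2)"
      "fst e1 \<notin> pe B1 \<or> fst e2 \<notin> pe B2"
  proof (rule mk2[OF G BB(1) S2(2) _ S2(4) _ _ _ _ _ that(1) e(3,4)])
    show "length XBB \<ge> 2" using BB(6) ear(2) S1(4) by simp
    show "last XBB = hd B2" "last B2 = hd XBB" using BB S2 by auto
    show "set XBB \<inter> set B2 \<subseteq> {hd XBB, hd B2}"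
      using BB(3,4) S2(7) sv sA vi S1(15) by auto
    show "pe XBB \<inter> pe B2 = {}" using BB(2) pA1 ei ear(4) by auto
    show "pe XBB \<union> pe B2 \<subseteq> Es G" using BB(2) EGx by auto
    show "fst e1 \<notin> pe XBB \<union> pe B2 \<or> fst e2 \<notin> pe XBB \<union> pe B2"
      using that(2) BB(2) ed pA1 by auto
  qed
  have cAB: "\<exists>D. D \<subseteq> G \<and> even_cycle D \<and> rainbow D" if "even (length XAB + length (rev xs3))"
      "fst e1 \<notin> pe A1 \<or> fst e2 \<notin> pe B2"
  proof (rule mk2[OF G AB(1) rx3(1) _ rx3(4) _ _ _ _ _ that(1) e(3,4)])
    show "length XAB \<ge> 2" using AB(6) ear(2) S1(3) S2(4) by simp
    show "last XAB = hd (rev xs3)" "last (rev xs3) = hd XAB" using AB rx3 by auto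
    show "set XAB \<inter> set (rev xs3) \<subseteq> {hd XAB, hd (rev xs3)}"
      using AB(3,4) rx3(2) sv sA vi by auto
    show "pe XAB \<inter> pe (rev xs3) = {}" using AB(2) pA1 ei ear(4) by (auto simp: pe_rev)
    show "pe XAB \<union> pe (rev xs3) \<subseteq> Es G" using AB(2) EGx by (auto simp: pe_rev)
    show "fst e1 \<notin> pe XAB \<union> pe (rev xs3) \<or> fst e2 \<notin> pe XAB \<union> pe (rev xs3)"
      using that(2) AB(2) ed pA1 by (auto simp: pe_rev)
  qed
  have cBA: "\<exists>D. D \<subseteq> G \<and> even_cycle D \<and> rainbow D" if "even (length XBA + length xs3)"
      "fst e1 \<notin> pe B1 \<or> fst e2 \<notin> pe A2"
  proof (rule mk2[OF G BA(1) d(3) _ l(3) _ _ _ _ _ that(1) e(3,4)])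
    show "length XBA \<ge> 2" using BA(6) ear(2) S1(4) S2(3) by simp
    show "last XBA = hd xs3" "last xs3 = hd XBA" using BA h t by auto
    show "set XBA \<inter> set xs3 \<subseteq> {hd XBA, hd xs3}"
      using BA(3,4) h(3) sv sA vi by auto
    show "pe XBA \<inter> pe xs3 = {}" using BA(2) pA1 ei ear(4) by auto
    show "pe XBA \<union> pe xs3 \<subseteq> Es G" using BA(2) EGx by auto
    show "fst e1 \<notin> pe XBA \<union> pe xs3 \<or> fst e2 \<notin> pe XBA \<union> pe xs3"
      using that(2) BA(2) ed pA1 by auto
  qed
  have e1AB: "fst e1 \<in> pe A1 \<longleftrightarrow> fst e1 \<notin> pe B1" using e(1) S1(11,12) by blast
  have e2AB: "fst e2 \<in> pe A2 \<longleftrightarrow> fst e2 \<notin> pe B2" using e(2) S2(11,12) by blast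
  show ?thesis using par2 cAA cBB cAB cBA e1AB e2AB by blast
qed



lemma hd_last_not_pe:
  assumes "distinct zs" "length zs \<ge> 3" shows "{hd zs, last zs} \<notin> pe zs"
proof
  let ?n = "length zs"
  have ne: "zs \<noteq> []" using assms by auto
  assume "{hd zs, last zs} \<in> pe zs"
  then obtain i where i: "{last zs, hd zs} = {zs ! i, zs ! (i+1)}" "i + 1 < ?n" by (auto simp: pe_nth insert_commute)
  have l: "last zs = zs ! (?n - 1)" using ne by (simp add: last_conv_nth)
  have h: "hd zs = zs ! 0" using ne by (simp add: hd_conv_nth)
  have inj: "\<And>a b. a < ?n \<Longrightarrow> b < ?n \<Longrightarrow> zs ! a = zs ! b \<Longrightarrow> a = b"
    using assms(1) nth_eq_iff_index_eq by blast
  from i(1) have "(zs ! (?n-1) = zs ! i \<and> zs ! 0 = zs ! (i+1)) \<or> (zs ! (?n-1) = zs ! (i+1) \<and> zs ! 0 = zs ! i)"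
    unfolding l h by (auto simp: doubleton_eq_iff)
  then show False
  proof
    assume "zs ! (?n-1) = zs ! i \<and> zs ! 0 = zs ! (i+1)"
    then have "?n - 1 = i" using inj i(2) by (metis add_lessD1 diff_less ne length_greater_0_conv zero_less_one)
    then show False using i(2) by simp
  next
    assume a: "zs ! (?n-1) = zs ! (i+1) \<and> zs ! 0 = zs ! i"
    then have "?n - 1 = i + 1" using inj i(2) by (metis diff_less ne length_greater_0_conv zero_less_one)
    moreover have "0 = i" using inj i(2) a by (metis add_lessD1 ne length_greater_0_conv)
    ultimately show False using assms(2) by simp
  qed
qed

lemma pe_take: "pe (take k xs) \<subseteq> pe xs"
  using pe_append[of "take k xs" "drop k xs"] by auto

lemma pe_drop: "pe (drop k xs) \<subseteq> pe xs"
  using pe_append[of "take k xs" "drop k xs"] by auto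

lemma pe_ce: "pe xs \<subseteq> ce xs"
  by (cases "xs = []") (auto simp: ce_pe pe_append)

lemma ear_exists:
  assumes "distinct cs" "length cs \<ge> 3" "card (set cs \<inter> W) \<ge> 2" "f \<in> ce cs" "f \<notin> F"
    "\<forall>e\<in>F. e \<subseteq> W"
  obtains ear where "distinct ear" "length ear \<ge> 2" "hd ear \<in> W" "last ear \<in> W" "hd ear \<noteq> last ear"
    "\<forall>x\<in>set ear. x \<in> W \<longrightarrow> x = hd ear \<or> x = last ear" "pe ear \<subseteq> ce cs" "pe ear \<inter> F = {}"
proof -
  let ?n = "length cs"
  obtain j where j: "j < ?n" "f = {cs ! j, cs ! ((j+1) mod ?n)}" using assms(4) unfolding ce_def by blast
  define ds where "ds = rotate (Suc j) cs"
  have L: "length ds = ?n" "distinct ds" "set ds = set cs" "ce ds = ce cs"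
    using assms(1) ce_rotate[of "Suc j" cs] unfolding ds_def by auto
  have ne: "ds \<noteq> []" using L(1) assms(2) by auto
  have d0: "hd ds = cs ! ((j+1) mod ?n)"
    using nth_rotate[of 0 cs "Suc j"] assms(2) ne by (simp add: ds_def hd_conv_nth)
  have dl: "last ds = cs ! j"
  proof -
    have "last ds = ds ! (?n - 1)" using ne L(1) by (simp add: last_conv_nth)
    also have "\<dots> = cs ! ((Suc j + (?n - 1)) mod ?n)" using nth_rotate[of "?n - 1" cs "Suc j"] assms(2)
      by (simp add: ds_def)
    also have "(Suc j + (?n - 1)) = j + ?n" using assms(2) by simp
    also have "(j + ?n) mod ?n = j" using j(1) by simp
    finally show ?thesis .
  qed
  have f: "f = {last ds, hd ds}" using j(2) d0 dl by simp
  define I where "I = {i. i < ?n \<and> ds ! i \<in> W}"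
  have fI: "finite I" by (simp add: I_def)
  have "set ds \<inter> W = (\<lambda>i. ds ! i) ` I" using L(1) by (auto simp: I_def in_set_conv_nth)
  moreover have "inj_on (\<lambda>i. ds ! i) I" using L(1,2) by (auto simp: I_def inj_on_def nth_eq_iff_index_eq)
  ultimately have "card I \<ge> 2" using assms(3) L(3) by (metis card_image)
  then have Ine: "I \<noteq> {}" by auto
  define a where "a = Min I"
  define b where "b = Max I"
  have aI: "a \<in> I" "b \<in> I" using fI Ine by (auto simp: a_def b_def)
  have ab: "a < b"
  proof -
    have "\<not> card I \<le> Suc 0" using \<open>card I \<ge> 2\<close> by simp
    then obtain x y where "x \<in> I" "y \<in> I" "x \<noteq> y" using card_le_Suc0_iff_eq[OF fI] by blast
    moreover have "a \<le> x" "a \<le> y" "x \<le> b" "y \<le> b"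
      using fI \<open>x \<in> I\<close> \<open>y \<in> I\<close> unfolding a_def b_def by auto
    ultimately show ?thesis by arith
  qed
  have an: "a < ?n" "b < ?n" using aI by (auto simp: I_def)
  have aw: "ds ! a \<in> W" "ds ! b \<in> W" using aI by (auto simp: I_def)
  have amin: "\<And>i. i < ?n \<Longrightarrow> ds ! i \<in> W \<Longrightarrow> a \<le> i" using fI by (auto simp: a_def I_def)
  have bmax: "\<And>i. i < ?n \<Longrightarrow> ds ! i \<in> W \<Longrightarrow> i \<le> b" using fI by (auto simp: b_def I_def)
  define ear where "ear = drop b ds @ take (a+1) ds"
  have dd: "set (drop b ds) \<inter> set (take (a+1) ds) = {}"
  proof -
    have "set (take (a+1) ds) \<inter> set (drop b ds) = {}"
      using set_take_disj_set_drop_if_distinct[OF L(2)] ab by simp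
    then show ?thesis by auto
  qed
  have dE: "distinct ear" using L(2) dd by (auto simp: ear_def)
  have lE: "length ear \<ge> 2" using an L(1) by (simp add: ear_def)
  have ne: "ds \<noteq> []" using L(1) assms(2) by auto
  have hE: "hd ear = ds ! b" using an L(1) by (simp add: ear_def hd_drop_conv_nth)
  have lastE: "last ear = ds ! a" using an L(1) ne last_take_nth[of a ds] by (simp add: ear_def last_append)
  have hl: "hd ear \<noteq> last ear" proof
    assume "hd ear = last ear"
    then have "ds ! b = ds ! a" using hE lastE by simp
    then have "b = a" using L(2) an L(1) nth_eq_iff_index_eq by metis
    then show False using ab by simp
  qed
  have sW: "\<forall>x\<in>set ear. x \<in> W \<longrightarrow> x = hd ear \<or> x = last ear"
  proof (intro ballI impI)
    fix x assume x: "x \<in> set ear" "x \<in> W"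
    show "x = hd ear \<or> x = last ear"
    proof (cases "x \<in> set (drop b ds)")
      case True
      then obtain m where m: "m < ?n - b" "x = ds ! (b + m)" using L(1) by (auto simp: in_set_conv_nth)
      have bm: "b + m < ?n" using m(1) by linarith
      then have "b + m \<le> b" using bmax[OF bm] x(2) m(2) by simp
      then show ?thesis using m hE by simp
    next
      case False
      then have "x \<in> set (take (a+1) ds)" using x by (auto simp: ear_def)
      then obtain m where m: "m < a + 1" "x = ds ! m" using an L(1) by (auto simp: in_set_conv_nth)
      then have "a \<le> m" using amin x(2) an by auto
      then have "m = a" using m(1) by simp
      then show ?thesis using m lastE by simp
    qed
  qed
  have ne1: "drop b ds \<noteq> []" "take (a+1) ds \<noteq> []" using an L(1) by auto
  have peE: "pe ear = pe (drop b ds) \<union> pe (take (a+1) ds) \<union> {f}"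
  proof -
    have "last (drop b ds) = last ds" using an L(1) by simp
    moreover have "hd (take (a+1) ds) = hd ds" using ne by simp
    ultimately show ?thesis using ne1 f by (simp add: ear_def pe_append)
  qed
  have "pe ear \<subseteq> ce cs"
  proof -
    have "pe (drop b ds) \<subseteq> ce ds" "pe (take (a+1) ds) \<subseteq> ce ds" using pe_take[of "a+1" ds] pe_drop[of b ds] pe_ce[of ds] by auto
    moreover have "f \<in> ce cs" by fact
    ultimately show ?thesis using peE L(4) by auto
  qed
  moreover have "pe ear \<inter> F = {}"
  proof (rule ccontr)
    assume "pe ear \<inter> F \<noteq> {}"
    then obtain e where e: "e \<in> pe ear" "e \<in> F" by blast
    then have "e \<subseteq> W" using assms(6) by blast
    moreover have "e \<subseteq> set ear" using e pe_subset_set by blast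
    ultimately have "e \<subseteq> {hd ear, last ear}" using sW by auto
    moreover have "card e = 2" using pe_card2 dE e by blast
    moreover have "card {hd ear, last ear} = 2" using hl by simp
    ultimately have eq: "e = {hd ear, last ear}"
      using card_seteq[of "{hd ear, last ear}" e] by simp
    show False
    proof (cases "length ear \<ge> 3")
      case True
      then show False using hd_last_not_pe[OF dE] e(1) eq by simp
    next
      case False
      then have "length ear = 2" using lE by simp
      then have "b = ?n - 1" "a = 0" using an ab L(1) by (auto simp: ear_def)
      then have "e = f" using eq hE lastE f ne L(1) by (simp add: last_conv_nth hd_conv_nth insert_commute)
      then show False using e(2) assms(5) by simp
    qed
  qed
  ultimately show ?thesis using that dE lE hE lastE aw hl sW by simp
qed



lemma pairC:
  assumes G: "colored_graph G"
    and P: "distinct xa" "distinct xb" "length xa \<ge> 2" "length xb \<ge> 2" "hd xa = s" "hd xb = s"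
      "last xa = t" "last xb = t" "set xa \<inter> set xb \<subseteq> {s,t}" "pe xa \<inter> pe xb = {}"
      "pe xa \<union> pe xb \<subseteq> Es G"
    and ear: "distinct ear" "length ear \<ge> 2"
      "\<forall>x\<in>set ear. x \<in> set xa \<union> set xb \<longrightarrow> x = hd ear \<or> x = last ear"
      "pe ear \<inter> (pe xa \<union> pe xb) = {}" "pe ear \<subseteq> Es G" "hd ear \<noteq> last ear"
    and e: "fst e \<notin> pe xa \<union> pe xb \<union> pe ear" "inj_on snd (G - {e})"
    and c: "even (length xa + length xb) \<or> (hd ear \<in> set xa \<union> set xb \<and> last ear \<in> set xa \<union> set xb)"
  shows "\<exists>D. D \<subseteq> G \<and> even_cycle D \<and> rainbow D"
proof -
  have ne: "xa \<noteq> []" "xb \<noteq> []" using P by auto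
  have r: "distinct (rev xb)" "length (rev xb) \<ge> 2" "last xa = hd (rev xb)" "last (rev xb) = hd xa"
    "set xa \<inter> set (rev xb) \<subseteq> {hd xa, hd (rev xb)}" "pe xa \<inter> pe (rev xb) = {}"
    using P ne by (auto simp: hd_rev last_rev pe_rev)
  let ?zs = "xa @ butlast (tl (rev xb))"
  have g: "distinct ?zs \<and> length ?zs \<ge> 3 \<and> ce ?zs = pe xa \<union> pe (rev xb) \<and> length ?zs + 2 = length xa + length (rev xb)"
    using glue[OF P(1) r(1) P(3) r(2) r(3,4,5,6)] .
  have ce: "ce ?zs = pe xa \<union> pe xb" using g by (simp add: pe_rev)
  have sz: "set ?zs = set xa \<union> set xb"
  proof -
    have lz: "length ?zs \<ge> 2" using g by linarith
    have "set ?zs = \<Union> (ce ?zs)" by (rule Union_ce[OF lz, symmetric])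
    also have "\<dots> = \<Union> (pe xa) \<union> \<Union> (pe xb)" using ce by simp
    also have "\<dots> = set xa \<union> set xb" using P(3,4) by (simp add: Union_pe)
    finally show ?thesis .
  qed
  have inj: "inj_on snd (sub G (ce ?zs \<union> pe ear))"
    by (rule inj_on_subset[OF e(2)]) (use e(1) ce in \<open>auto simp: sub_def\<close>)
  show ?thesis
  proof (cases "even (length xa + length xb)")
    case True
    show ?thesis
    proof (rule mk_even_ce[OF G, of ?zs])
      show "distinct ?zs" "length ?zs \<ge> 3" using g by auto
      show "ce ?zs \<subseteq> Es G" using ce P(11) by simp
      show "even (length ?zs)" using g True by simp
      show "inj_on snd (sub G (ce ?zs))" by (rule inj_on_subset[OF inj], rule sub_mono) auto
    qed
  next
    case False
    then have he: "hd ear \<in> set ?zs" "last ear \<in> set ?zs" using c sz by auto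
    show ?thesis
    proof (rule cyc_case[OF G _ _ _ ear(1,2) he ear(6) _ _ ear(5) inj])
      show "distinct ?zs" "length ?zs \<ge> 3" using g by auto
      show "ce ?zs \<subseteq> Es G" using ce P(11) by simp
      show "set ear \<inter> set ?zs \<subseteq> {hd ear, last ear}" using ear(3) sz by auto
      show "pe ear \<inter> ce ?zs = {}" using ear(4) ce by simp
    qed
  qed
qed

lemma badcase:
  assumes G: "colored_graph G"
   and d: "distinct xs1" "distinct xs2" "distinct xs3"
   and l: "length xs1 \<ge> 2" "length xs2 \<ge> 2" "length xs3 \<ge> 2"
   and h: "hd xs1 = s" "hd xs2 = s" "hd xs3 = s"
   and t: "last xs1 = t" "last xs2 = t" "last xs3 = t"
   and vi: "set xs1 \<inter> set xs2 \<subseteq> {s,t}" "set xs1 \<inter> set xs3 \<subseteq> {s,t}" "set xs2 \<inter> set xs3 \<subseteq> {s,t}"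
   and ei: "pe xs1 \<inter> pe xs2 = {}" "pe xs1 \<inter> pe xs3 = {}" "pe xs2 \<inter> pe xs3 = {}"
   and EG: "pe xs1 \<union> pe xs2 \<union> pe xs3 \<subseteq> Es G"
   and ear: "distinct ear" "length ear \<ge> 2"
     "\<forall>x\<in>set ear. x \<in> set xs1 \<union> set xs2 \<union> set xs3 \<longrightarrow> x = hd ear \<or> x = last ear"
     "pe ear \<inter> (pe xs1 \<union> pe xs2 \<union> pe xs3) = {}" "pe ear \<subseteq> Es G"
   and ends: "hd ear \<in> set xs1 \<union> set xs2 \<union> set xs3" "last ear \<in> set xs1 \<union> set xs2 \<union> set xs3"
     "hd ear \<noteq> last ear"
   and e: "fst e1 \<in> pe xs1" "fst e2 \<in> pe xs2" "inj_on snd (G - {e1})" "inj_on snd (G - {e2})"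
  shows "\<exists>D. D \<subseteq> G \<and> even_cycle D \<and> rainbow D"
proof -
  have ed: "fst e1 \<notin> pe xs2" "fst e1 \<notin> pe xs3" "fst e1 \<notin> pe ear"
     "fst e2 \<notin> pe xs1" "fst e2 \<notin> pe xs3" "fst e2 \<notin> pe ear"
    using e ei ear(4) by blast+
  show ?thesis
  proof (cases "even (length xs1 + length xs3) \<or> (hd ear \<in> set xs1 \<union> set xs3 \<and> last ear \<in> set xs1 \<union> set xs3)")
    case True
    show ?thesis
      by (rule pairC[OF G d(1,3) l(1,3) h(1,3) t(1,3) vi(2) ei(2) _ ear(1,2) _ _ ear(5) ends(3) _ e(4) True])
         (use EG ear(3,4) ed in auto)
  next
    case F1: False
    show ?thesis
    proof (cases "even (length xs2 + length xs3) \<or> (hd ear \<in> set xs2 \<union> set xs3 \<and> last ear \<in> set xs2 \<union> set xs3)")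
      case True
      show ?thesis
        by (rule pairC[OF G d(2,3) l(2,3) h(2,3) t(2,3) vi(3) ei(3) _ ear(1,2) _ _ ear(5) ends(3) _ e(3) True])
           (use EG ear(3,4) ed in auto)
    next
      case F2: False
      have par: "odd (length xs1 + length xs3)" "odd (length xs2 + length xs3)" using F1 F2 by auto
      have cases: "(hd ear \<in> set xs1 \<and> hd ear \<notin> set xs2 \<and> hd ear \<notin> set xs3 \<and>
          last ear \<in> set xs2 \<and> last ear \<notin> set xs1 \<and> last ear \<notin> set xs3) \<or>
          (last ear \<in> set xs1 \<and> last ear \<notin> set xs2 \<and> last ear \<notin> set xs3 \<and>
          hd ear \<in> set xs2 \<and> hd ear \<notin> set xs1 \<and> hd ear \<notin> set xs3)"
        using F1 F2 ends(1,2) by blast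
      then show ?thesis
      proof
        assume uv: "hd ear \<in> set xs1 \<and> hd ear \<notin> set xs2 \<and> hd ear \<notin> set xs3 \<and>
          last ear \<in> set xs2 \<and> last ear \<notin> set xs1 \<and> last ear \<notin> set xs3"
        show ?thesis
          by (rule caseC[OF G d l h t vi ei EG ear _ _ _ _ _ _ e par]) (use uv in auto)
      next
        assume uv: "last ear \<in> set xs1 \<and> last ear \<notin> set xs2 \<and> last ear \<notin> set xs3 \<and>
          hd ear \<in> set xs2 \<and> hd ear \<notin> set xs1 \<and> hd ear \<notin> set xs3"
        have ne: "ear \<noteq> []" using ear(2) by auto
        show ?thesis
        proof (rule caseC[OF G d l h t vi ei EG _ _ _ _ _ _ _ _ _ _ _ e par, of "rev ear"])
          show "distinct (rev ear)" "length (rev ear) \<ge> 2" using ear by auto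
          show "\<forall>x\<in>set (rev ear). x \<in> set xs1 \<union> set xs2 \<union> set xs3 \<longrightarrow> x = hd (rev ear) \<or> x = last (rev ear)"
            using ear(3) ne by (auto simp: hd_rev last_rev)
          show "pe (rev ear) \<inter> (pe xs1 \<union> pe xs2 \<union> pe xs3) = {}" "pe (rev ear) \<subseteq> Es G"
            using ear(4,5) by (auto simp: pe_rev)
        qed (use uv ne in \<open>auto simp: hd_rev last_rev\<close>)
      qed
    qed
  qed
qed

lemma badcase':
  assumes G: "colored_graph G"
   and d: "distinct xs1" "distinct xs2" "distinct xs3"
   and l: "length xs1 \<ge> 2" "length xs2 \<ge> 2" "length xs3 \<ge> 2"
   and h: "hd xs1 = s" "hd xs2 = s" "hd xs3 = s"
   and t: "last xs1 = t" "last xs2 = t" "last xs3 = t"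
   and vi: "set xs1 \<inter> set xs2 \<subseteq> {s,t}" "set xs1 \<inter> set xs3 \<subseteq> {s,t}" "set xs2 \<inter> set xs3 \<subseteq> {s,t}"
   and ei: "pe xs1 \<inter> pe xs2 = {}" "pe xs1 \<inter> pe xs3 = {}" "pe xs2 \<inter> pe xs3 = {}"
   and EG: "E \<subseteq> Es G"
   and VV: "set xs1 \<union> set xs2 \<union> set xs3 = V" and EE: "pe xs1 \<union> pe xs2 \<union> pe xs3 = E"
   and ear: "distinct ear" "length ear \<ge> 2"
     "\<forall>x\<in>set ear. x \<in> V \<longrightarrow> x = hd ear \<or> x = last ear"
     "pe ear \<inter> E = {}" "pe ear \<subseteq> Es G"
   and ends: "hd ear \<in> V" "last ear \<in> V" "hd ear \<noteq> last ear"
   and e: "fst e1 \<in> pe xs1" "fst e2 \<in> pe xs2" "inj_on snd (G - {e1})" "inj_on snd (G - {e2})"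
  shows "\<exists>D. D \<subseteq> G \<and> even_cycle D \<and> rainbow D"
  using badcase[OF G d l h t vi ei EG[folded EE] ear(1,2) ear(3)[folded VV] ear(4)[folded EE] ear(5)
      ends(1,2)[folded VV] ends(3) e] .

lemma bad_sym:
  assumes G: "colored_graph G"
   and d: "distinct xs1" "distinct xs2" "distinct xs3"
   and l: "length xs1 \<ge> 2" "length xs2 \<ge> 2" "length xs3 \<ge> 2"
   and h: "hd xs1 = s" "hd xs2 = s" "hd xs3 = s"
   and t: "last xs1 = t" "last xs2 = t" "last xs3 = t"
   and vi: "set xs1 \<inter> set xs2 \<subseteq> {s,t}" "set xs1 \<inter> set xs3 \<subseteq> {s,t}" "set xs2 \<inter> set xs3 \<subseteq> {s,t}"
   and ei: "pe xs1 \<inter> pe xs2 = {}" "pe xs1 \<inter> pe xs3 = {}" "pe xs2 \<inter> pe xs3 = {}"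
   and EG: "E \<subseteq> Es G"
   and VV: "set xs1 \<union> set xs2 \<union> set xs3 = V" and EE: "pe xs1 \<union> pe xs2 \<union> pe xs3 = E"
   and ear: "distinct ear" "length ear \<ge> 2"
     "\<forall>x\<in>set ear. x \<in> V \<longrightarrow> x = hd ear \<or> x = last ear"
     "pe ear \<inter> E = {}" "pe ear \<subseteq> Es G"
   and ends: "hd ear \<in> V" "last ear \<in> V" "hd ear \<noteq> last ear"
   and e: "fst e1 \<in> E" "fst e2 \<in> E" "inj_on snd (G - {e1})" "inj_on snd (G - {e2})"
   and ne: "\<not> (fst e1 \<in> pe xs1 \<and> fst e2 \<in> pe xs1)" "\<not> (fst e1 \<in> pe xs2 \<and> fst e2 \<in> pe xs2)"
      "\<not> (fst e1 \<in> pe xs3 \<and> fst e2 \<in> pe xs3)"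
  shows "\<exists>D. D \<subseteq> G \<and> even_cycle D \<and> rainbow D"
proof -
  have vi': "set xs2 \<inter> set xs1 \<subseteq> {s,t}" "set xs3 \<inter> set xs1 \<subseteq> {s,t}" "set xs3 \<inter> set xs2 \<subseteq> {s,t}"
    using vi by auto
  have ei': "pe xs2 \<inter> pe xs1 = {}" "pe xs3 \<inter> pe xs1 = {}" "pe xs3 \<inter> pe xs2 = {}"
    using ei by auto
  have V': "set xs1 \<union> set xs3 \<union> set xs2 = V" "set xs2 \<union> set xs1 \<union> set xs3 = V"
    "set xs2 \<union> set xs3 \<union> set xs1 = V" "set xs3 \<union> set xs1 \<union> set xs2 = V" "set xs3 \<union> set xs2 \<union> set xs1 = V"
    using VV by auto
  have E': "pe xs1 \<union> pe xs3 \<union> pe xs2 = E" "pe xs2 \<union> pe xs1 \<union> pe xs3 = E"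
    "pe xs2 \<union> pe xs3 \<union> pe xs1 = E" "pe xs3 \<union> pe xs1 \<union> pe xs2 = E" "pe xs3 \<union> pe xs2 \<union> pe xs1 = E"
    using EE by auto
  note B = badcase'[OF G _ _ _ _ _ _ _ _ _ _ _ _ _ _ _ _ _ _ EG _ _ ear ends _ _ e(3,4)]
  have c: "(fst e1 \<in> pe xs1 \<and> fst e2 \<in> pe xs2) \<or> (fst e1 \<in> pe xs1 \<and> fst e2 \<in> pe xs3) \<or>
      (fst e1 \<in> pe xs2 \<and> fst e2 \<in> pe xs1) \<or> (fst e1 \<in> pe xs2 \<and> fst e2 \<in> pe xs3) \<or>
      (fst e1 \<in> pe xs3 \<and> fst e2 \<in> pe xs1) \<or> (fst e1 \<in> pe xs3 \<and> fst e2 \<in> pe xs2)"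
    using e(1,2) ne EE by blast
  then show ?thesis
  proof (elim disjE conjE)
    assume a: "fst e1 \<in> pe xs1" "fst e2 \<in> pe xs2"
    show ?thesis by (rule B[OF d(1,2,3) l(1,2,3) h(1,2,3) t(1,2,3) vi(1,2,3) ei(1,2,3) VV EE a])
  next
    assume a: "fst e1 \<in> pe xs1" "fst e2 \<in> pe xs3"
    show ?thesis by (rule B[OF d(1,3,2) l(1,3,2) h(1,3,2) t(1,3,2) vi(2,1) vi'(3) ei(2,1) ei'(3) V'(1) E'(1) a])
  next
    assume a: "fst e1 \<in> pe xs2" "fst e2 \<in> pe xs1"
    show ?thesis by (rule B[OF d(2,1,3) l(2,1,3) h(2,1,3) t(2,1,3) vi'(1) vi(3,2) ei'(1) ei(3,2) V'(2) E'(2) a])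
  next
    assume a: "fst e1 \<in> pe xs2" "fst e2 \<in> pe xs3"
    show ?thesis by (rule B[OF d(2,3,1) l(2,3,1) h(2,3,1) t(2,3,1) vi(3) vi'(1,2) ei(3) ei'(1,2) V'(3) E'(3) a])
  next
    assume a: "fst e1 \<in> pe xs3" "fst e2 \<in> pe xs1"
    show ?thesis by (rule B[OF d(3,1,2) l(3,1,2) h(3,1,2) t(3,1,2) vi'(2,3) vi(1) ei'(2,3) ei(1) V'(4) E'(4) a])
  next
    assume a: "fst e1 \<in> pe xs3" "fst e2 \<in> pe xs2"
    show ?thesis by (rule B[OF d(3,2,1) l(3,2,1) h(3,2,1) t(3,2,1) vi'(3,2,1) ei'(3,2,1) V'(5) E'(5) a])
  qed
qed



lemma cg_union:
  assumes "colored_graph A" "colored_graph B" "Es A \<inter> Es B = {}"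
  shows "colored_graph (A \<union> B)"
  using assms unfolding colored_graph_def Es_def by blast

lemma Es_Un: "Es (A \<union> B) = Es A \<union> Es B" by (auto simp: Es_def)
lemma Vs_Un: "Vs (A \<union> B) = Vs A \<union> Vs B" by (auto simp: Vs_def)

lemma path_list:
  assumes "is_path P s t"
  obtains xs where "distinct xs" "length xs \<ge> 2" "hd xs = s" "last xs = t" "Es P = pe xs" "Vs P = set xs"
    "colored_graph P"
proof -
  from assms obtain xs where x: "distinct xs" "length xs \<ge> 2" "hd xs = s" "last xs = t"
    "Es P = {{xs ! i, xs ! (i+1)} | i. i + 1 < length xs}" "colored_graph P"
    unfolding is_path_def by blast
  have E: "Es P = pe xs" using x(5) by (simp add: pe_nth)
  have "Vs P = set xs" using E x(2) by (simp add: Vs_Es Union_pe)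
  then show ?thesis using that x E by blast
qed

lemma cycle_list:
  assumes "is_cycle C"
  obtains cs where "distinct cs" "length cs \<ge> 3" "Es C = ce cs" "Vs C = set cs" "colored_graph C"
proof -
  from assms obtain cs where x: "distinct cs" "length cs \<ge> 3" "Es C = ce cs" "colored_graph C"
    unfolding is_cycle_def ce_def by blast
  have "Vs C = set cs" using x(2,3) by (simp add: Vs_Es Union_ce)
  then show ?thesis using that x by blast
qed

theorem lemma2p5:
  fixes C X :: "('v,'c) cgraph"
  assumes "is_cycle C" and "rainbow C"
    and "(is_cycle X \<and> rainbow X) \<or> bad_piece X"
    and "colors X \<inter> colors (C - X) = {}"
    and "Es C - Es X \<noteq> {}"
    and "card (Vs C \<inter> Vs X) \<ge> 2"
  shows "\<exists>D. D \<subseteq> C \<union> X \<and> even_cycle D \<and> rainbow D"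
proof -
  obtain cs where cs: "distinct cs" "length cs \<ge> 3" "Es C = ce cs" "Vs C = set cs" "colored_graph C"
    using cycle_list[OF assms(1)] by blast
  have finC: "finite C" using cs(5) by (simp add: colored_graph_def)
  have cgX: "colored_graph X"
    using assms(3)
  proof
    assume "is_cycle X \<and> rainbow X" then show ?thesis by (simp add: is_cycle_def)
  next
    assume "bad_piece X"
    then obtain P1 P2 P3 s t where th: "X = P1 \<union> P2 \<union> P3" "is_path P1 s t" "is_path P2 s t" "is_path P3 s t"
      "Es P1 \<inter> Es P2 = {}" "Es P1 \<inter> Es P3 = {}" "Es P2 \<inter> Es P3 = {}"
      unfolding bad_piece_def theta_of_def by blast
    have "colored_graph P1" "colored_graph P2" "colored_graph P3" using th(2-4) by (simp_all add: is_path_def)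
    then show ?thesis unfolding th(1)
      by (intro cg_union) (use th(5-7) in \<open>auto simp: Es_Un\<close>)
  qed
  have finX: "finite X" using cgX by (simp add: colored_graph_def)
  obtain f where f: "f \<in> ce cs" "f \<notin> Es X" using assms(5) cs(3) by blast
  have EsV: "\<forall>e\<in>Es X. e \<subseteq> Vs X" by (auto simp: Vs_Es)
  have card: "card (set cs \<inter> Vs X) \<ge> 2" using assms(6) cs(4) by simp
  obtain ear where ear: "distinct ear" "length ear \<ge> 2" "hd ear \<in> Vs X" "last ear \<in> Vs X" "hd ear \<noteq> last ear"
    "\<forall>x\<in>set ear. x \<in> Vs X \<longrightarrow> x = hd ear \<or> x = last ear" "pe ear \<subseteq> ce cs" "pe ear \<inter> Es X = {}"
    using ear_exists[OF cs(1,2) card f EsV] by blast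
  define CE where "CE = sub C (pe ear)"
  define G0 where "G0 = CE \<union> X"
  have ECE: "Es CE = pe ear" unfolding CE_def using ear(7) cs(3) by (intro Es_sub) simp
  have cgCE: "colored_graph CE" unfolding CE_def using cs(5) by (rule cg_sub)
  have cgG0: "colored_graph G0" unfolding G0_def using cg_union[OF cgCE cgX] ECE ear(8) by simp
  have EG0: "Es G0 = pe ear \<union> Es X" unfolding G0_def by (simp add: Es_Un ECE)
  have CEsub: "CE \<subseteq> C - X"
  proof
    fix p assume p: "p \<in> CE"
    then have "p \<in> C" "fst p \<in> pe ear" by (auto simp: CE_def sub_def)
    moreover have "p \<notin> X" using \<open>fst p \<in> pe ear\<close> ear(8) by (auto simp: Es_def)
    ultimately show "p \<in> C - X" by simp
  qed
  have injC: "inj_on snd C" using assms(2) finC rainbow_inj by blast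
  have injCE: "inj_on snd CE" using injC CEsub inj_on_subset by blast
  have dis: "snd ` CE \<inter> snd ` X = {}" using assms(4) CEsub unfolding colors_def by blast
  have injG: "inj_on snd (CE \<union> Y)" if "Y \<subseteq> X" "inj_on snd Y" for Y
    using injCE that dis by (auto simp: inj_on_Un)
  have sG: "G0 \<subseteq> C \<union> X" using CEsub by (auto simp: G0_def)
  have "\<exists>D. D \<subseteq> G0 \<and> even_cycle D \<and> rainbow D"
    using assms(3)
  proof
    assume cx: "is_cycle X \<and> rainbow X"
    obtain xz where xz: "distinct xz" "length xz \<ge> 3" "Es X = ce xz" "Vs X = set xz"
      using cycle_list cx by blast
    have injX: "inj_on snd X" using cx finX rainbow_inj by blast
    have injG0: "inj_on snd G0" unfolding G0_def using injG[OF _ injX] by simp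
    show ?thesis
    proof (rule cyc_case[OF cgG0 xz(1,2) _ ear(1,2) _ _ ear(5)])
      show "ce xz \<subseteq> Es G0" using EG0 xz(3) by simp
      show "hd ear \<in> set xz" "last ear \<in> set xz" using ear(3,4) xz(4) by auto
      show "set ear \<inter> set xz \<subseteq> {hd ear, last ear}" using ear(6) xz(4) by auto
      show "pe ear \<inter> ce xz = {}" using ear(8) xz(3) by simp
      show "pe ear \<subseteq> Es G0" using EG0 by simp
      show "inj_on snd (sub G0 (ce xz \<union> pe ear))" using injG0 sub_subset inj_on_subset by blast
    qed
  next
    assume "bad_piece X"
    then obtain P1 P2 P3 s t where th: "X = P1 \<union> P2 \<union> P3" "is_path P1 s t" "is_path P2 s t" "is_path P3 s t"
      "Vs P1 \<inter> Vs P2 \<subseteq> {s,t}" "Vs P1 \<inter> Vs P3 \<subseteq> {s,t}" "Vs P2 \<inter> Vs P3 \<subseteq> {s,t}"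
      "Es P1 \<inter> Es P2 = {}" "Es P1 \<inter> Es P3 = {}" "Es P2 \<inter> Es P3 = {}"
      "rainbow P1" "rainbow P2" "rainbow P3" and ar: "almost_rainbow X"
      unfolding bad_piece_def theta_of_def by blast
    obtain xs1 where x1: "distinct xs1" "length xs1 \<ge> 2" "hd xs1 = s" "last xs1 = t" "Es P1 = pe xs1" "Vs P1 = set xs1"
      using path_list[OF th(2)] by blast
    obtain xs2 where x2: "distinct xs2" "length xs2 \<ge> 2" "hd xs2 = s" "last xs2 = t" "Es P2 = pe xs2" "Vs P2 = set xs2"
      using path_list[OF th(3)] by blast
    obtain xs3 where x3: "distinct xs3" "length xs3 \<ge> 2" "hd xs3 = s" "last xs3 = t" "Es P3 = pe xs3" "Vs P3 = set xs3"
      using path_list[OF th(4)] by blast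
    have EX: "pe xs1 \<union> pe xs2 \<union> pe xs3 = Es X" using th(1) x1 x2 x3 by (simp add: Es_Un)
    have VX: "set xs1 \<union> set xs2 \<union> set xs3 = Vs X" using th(1) x1 x2 x3 by (simp add: Vs_Un)
    have "\<not> inj_on snd X" using ar finX unfolding almost_rainbow_def colors_def
      by (simp add: inj_on_iff_eq_card)
    then obtain e1 e2 where e: "e1 \<in> X" "e2 \<in> X" "e1 \<noteq> e2" "snd e1 = snd e2"
      unfolding inj_on_def by blast
    have inj_rm: "inj_on snd (X - {e})" if "e \<in> {e1,e2}" for e
    proof -
      have fin: "finite (X - {e})" using finX by simp
      have "\<exists>e'. e' \<in> X \<and> e' \<noteq> e \<and> snd e' = snd e"
      proof (cases "e = e1")
        case True then show ?thesis using e by (intro exI[of _ e2]) auto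
      next
        case False then have "e = e2" using that by simp
        then show ?thesis using e by (intro exI[of _ e1]) auto
      qed
      then obtain e' where e': "e' \<in> X" "e' \<noteq> e" "snd e' = snd e" by blast
      have "snd ` X \<subseteq> snd ` (X - {e})"
      proof
        fix y assume "y \<in> snd ` X"
        then obtain x where x: "x \<in> X" "y = snd x" by auto
        show "y \<in> snd ` (X - {e})"
        proof (cases "x = e")
          case True then show ?thesis using e' x by (metis DiffI empty_iff image_eqI insert_iff)
        next
          case False then show ?thesis using x by auto
        qed
      qed
      then have "snd ` (X - {e}) = snd ` X" by auto
      moreover have "card (X - {e}) = card X - 1" using that e finX by auto
      ultimately have "card (snd ` (X - {e})) = card (X - {e})"
        using ar unfolding almost_rainbow_def colors_def by simp
      then show ?thesis using fin by (simp add: inj_on_iff_eq_card)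
    qed
    have inG: "inj_on snd (G0 - {e})" if "e \<in> {e1,e2}" for e
    proof -
      have "G0 - {e} \<subseteq> CE \<union> (X - {e})" by (auto simp: G0_def)
      then show ?thesis using injG[OF _ inj_rm[OF that]] inj_on_subset by blast
    qed
    have memP: "e \<in> P" if hm: "e \<in> X" "fst e \<in> Es P" "P \<subseteq> X" for e P
    proof -
      obtain q where "q \<in> P" "fst q = fst e" using hm(2) by (auto simp: Es_def)
      then show ?thesis using cgX hm unfolding colored_graph_def by (metis subsetD)
    qed
    have injP: "inj_on snd P1" "inj_on snd P2" "inj_on snd P3"
      using th(11-13) finX th(1) rainbow_inj by (metis finite_Un)+
    have nP: "\<not> (fst e1 \<in> Es P \<and> fst e2 \<in> Es P)" if hP: "P \<subseteq> X" "inj_on snd P" for P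
    proof
      assume "fst e1 \<in> Es P \<and> fst e2 \<in> Es P"
      then have "e1 \<in> P" "e2 \<in> P" using memP e hP(1) by blast+
      then show False using hP(2) e(3,4) unfolding inj_on_def by blast
    qed
    have "inj_on snd (G0 - {e1})" "inj_on snd (G0 - {e2})" using inG by auto
    note inG = this
    have fe: "fst e1 \<in> Es X" "fst e2 \<in> Es X" using e by (auto simp: Es_def)
    show ?thesis
    proof (rule bad_sym[OF cgG0 x1(1) x2(1) x3(1) x1(2) x2(2) x3(2) x1(3) x2(3) x3(3) x1(4) x2(4) x3(4)
          _ _ _ _ _ _ _ VX EX ear(1,2) ear(6) ear(8) _ ear(3,4,5) fe inG])
      show "set xs1 \<inter> set xs2 \<subseteq> {s,t}" "set xs1 \<inter> set xs3 \<subseteq> {s,t}" "set xs2 \<inter> set xs3 \<subseteq> {s,t}"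
        using th(5-7) x1 x2 x3 by auto
      show "pe xs1 \<inter> pe xs2 = {}" "pe xs1 \<inter> pe xs3 = {}" "pe xs2 \<inter> pe xs3 = {}"
        using th(8-10) x1 x2 x3 by auto
      show "Es X \<subseteq> Es G0" "pe ear \<subseteq> Es G0" using EG0 by auto
      show "\<not> (fst e1 \<in> pe xs1 \<and> fst e2 \<in> pe xs1)" using nP[of P1] injP th(1) x1(5) by auto
      show "\<not> (fst e1 \<in> pe xs2 \<and> fst e2 \<in> pe xs2)" using nP[of P2] injP th(1) x2(5) by auto
      show "\<not> (fst e1 \<in> pe xs3 \<and> fst e2 \<in> pe xs3)" using nP[of P3] injP th(1) x3(5) by auto
    qed
  qed
  then show ?thesis using sG by blast
qed

end
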